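(* Let $p^{(3)}(n)$ be defined by $\sum_{n\ge0}p^{(3)}(n)q^n=\prod_{j\ge1}(1-q^j)^{-3}$ (the number of three-colored partitions of $n$). Then for every $n\ge0$, $$p^{(3)}(n)=\sum_{\substack{c\in\mathcal C_{P_3}\\ |c|=n}}\ \prod_{j\ge1}\big((-1)^{j+1}(2j+1)\big)^{m_{j(j+1)/2}(c)}=\sum_{\substack{c\in\mathcal C_{P_3}\\ |c|=n}}(-1)^{\ell^+(c)}\prod_{j\ge1}(2j+1)^{m_{j(j+1)/2}(c)},$$ where $P_3=\{j(j+1)/2:j\in\mathbb N\}$.
   Context: A composition is an ordered finite sequence of positive integers (including the empty one); $|c|$ is the sum of parts; $m_i(c)$ is the number of parts of $c$ equal to $i$; $\mathcal C_T$ is the set of compositions with all parts in $T$. $\ell^+(c)$ is the number of parts of $c$ lying in $\{m(2m+1): m\in\mathbb N\}$ (the triangular numbers $j(j+1)/2$ with $j$ even). *)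

theory Defs
  imports "HOL-Computational_Algebra.Formal_Power_Series"
begin

text \<open>Three-coloured partition numbers: the n-th coefficient of
  prod_{j>=1} (1-q^j)^(-3). Only the factors with j <= n affect the
  coefficient of q^n, so the product is truncated at j = n.\<close>
definition p3 :: "nat \<Rightarrow> rat" where
  "p3 n = fps_nth ((inverse (\<Prod>j\<in>{1..n}. (1 - fps_X ^ j :: rat fps))) ^ 3) n"

definition compositions :: "nat set \<Rightarrow> nat \<Rightarrow> nat list set" where
  "compositions T n = {c. (\<forall>x\<in>set c. 0 < x \<and> x \<in> T) \<and> sum_list c = n}"

definition P3 :: "nat set" where
  "P3 = {j * (j + 1) div 2 | j. True}"

definition mult :: "nat \<Rightarrow> nat list \<Rightarrow> nat" where
  "mult i c = count_list c i"

definition ellplus :: "nat list \<Rightarrow> nat" where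
  "ellplus c = length (filter (\<lambda>x. x \<in> {m * (2 * m + 1) | m. True}) c)"

end

theory Submission imports Defs "HOL-Computational_Algebra.Polynomial"
begin
unbundle fps_syntax

abbreviation q :: "rat fps" where "q \<equiv> fps_X"

definition qp :: "nat \<Rightarrow> rat fps" where "qp m = (\<Prod>i\<in>{1..m}. 1 - q ^ i)"

lemma qp_0[simp]: "qp 0 = 1" by (simp add: qp_def)
lemma qp_Suc: "qp (Suc m) = qp m * (1 - q ^ Suc m)"
  by (simp add: qp_def prod.nat_ivl_Suc' mult.commute)

lemma qp_nth0[simp]: "qp m $ 0 = 1"
  by (induction m) (simp_all add: qp_Suc)

lemma qp_nz: "qp m \<noteq> 0"
  using qp_nth0[of m] by (metis fps_zero_nth zero_neq_one)

fun qbin :: "nat \<Rightarrow> nat \<Rightarrow> rat fps" where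
  "qbin m 0 = 1"
| "qbin 0 (Suc j) = 0"
| "qbin (Suc m) (Suc j) = qbin m j + q ^ Suc j * qbin m (Suc j)"

lemma qbin_gt: "m < j \<Longrightarrow> qbin m j = 0"
proof (induction m arbitrary: j)
  case 0 then show ?case by (cases j) auto
next
  case (Suc m) then show ?case by (cases j) auto
qed

lemma qbin_prod: "j \<le> m \<Longrightarrow> qbin m j * qp j * qp (m - j) = qp m"
proof (induction m arbitrary: j)
  case 0 then show ?case by simp
next
  case (Suc m)
  show ?case
  proof (cases j)
    case 0 then show ?thesis by simp
  next
    case (Suc i)
    show ?thesis
    proof (cases "i = m")
      case True
      then show ?thesis using Suc Suc.IH[of m] by (simp add: qbin_gt qp_Suc qp_nz)
    next
      case False
      with Suc Suc.prems have im: "Suc i \<le> m" by simp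
      have e1: "qbin m i * qp i * qp (m - i) = qp m" using Suc.IH[of i] im by simp
      have e2: "qbin m (Suc i) * qp (Suc i) * qp (m - Suc i) = qp m" using Suc.IH[of "Suc i"] im by simp
      have mi: "m - i = Suc (m - Suc i)" using im by simp
      have "qbin (Suc m) j * qp j * qp (Suc m - j)
          = qbin m i * qp i * qp (m - i) * (1 - q ^ Suc i)
            + q ^ Suc i * (qbin m (Suc i) * qp (Suc i) * qp (m - Suc i)) * (1 - q ^ (m - i))"
        using Suc mi by (simp add: qp_Suc algebra_simps)
      also have "\<dots> = qp m * (1 - q ^ Suc m)"
        using e1 e2 im by (simp add: algebra_simps flip: power_add)
      finally show ?thesis by (simp add: qp_Suc)
    qed
  qed
qed


lemma qbin_same[simp]: "qbin m m = 1"
  using qbin_prod[of m m] qp_nz[of m] by simp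

lemma qbin_pascal2: "qbin (Suc m) (Suc j) = q ^ (m - j) * qbin m j + qbin m (Suc j)"
proof -
  consider "Suc j \<le> m" | "j = m" | "m < j" by linarith
  then show ?thesis
  proof cases
    case 1
    have e1: "qbin m j * qp j * qp (m - j) = qp m" using qbin_prod[of j m] 1 by simp
    have e2: "qbin m (Suc j) * qp (Suc j) * qp (m - Suc j) = qp m" using qbin_prod[of "Suc j" m] 1 by simp
    have e3: "qbin (Suc m) (Suc j) * qp (Suc j) * qp (m - j) = qp (Suc m)" using qbin_prod[of "Suc j" "Suc m"] 1 by simp
    have mi: "m - j = Suc (m - Suc j)" using 1 by simp
    have "(q ^ (m - j) * qbin m j + qbin m (Suc j)) * (qp (Suc j) * qp (m - j))
        = q ^ (m - j) * (qbin m j * qp j * qp (m - j)) * (1 - q ^ Suc j)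
          + (qbin m (Suc j) * qp (Suc j) * qp (m - Suc j)) * (1 - q ^ (m - j))"
      by (simp add: qp_Suc mi algebra_simps)
    also have "\<dots> = qp m * (1 - q ^ Suc m)"
      using e1 e2 1 by (simp add: algebra_simps flip: power_add)
    also have "\<dots> = qbin (Suc m) (Suc j) * (qp (Suc j) * qp (m - j))"
      using e3 by (simp add: qp_Suc mult.assoc)
    finally show ?thesis
      using qp_nz by (metis mult_cancel_right mult_eq_0_iff)
  next
    case 2 then show ?thesis by (simp add: qbin_gt)
  next
    case 3 then show ?thesis by (simp add: qbin_gt)
  qed
qed

definition cg :: "nat \<Rightarrow> rat fps \<Rightarrow> rat fps \<Rightarrow> bool" where
  "cg m f g \<longleftrightarrow> (\<forall>j<m. f $ j = g $ j)"

lemma cg_refl[simp]: "cg m f f" by (simp add: cg_def)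
lemma cg_sym: "cg m f g \<Longrightarrow> cg m g f" by (simp add: cg_def)
lemma cg_trans: "cg m f g \<Longrightarrow> cg m g h \<Longrightarrow> cg m f h" by (simp add: cg_def)
lemma cg_mono: "cg m f g \<Longrightarrow> k \<le> m \<Longrightarrow> cg k f g" by (simp add: cg_def)

lemma cg_mult_right: "cg m f g \<Longrightarrow> cg m (f * h) (g * h)"
  unfolding cg_def by (auto simp: fps_mult_nth intro!: sum.cong)

lemma cg_mult_left: "cg m f g \<Longrightarrow> cg m (h * f) (h * g)"
  using cg_mult_right by (simp add: mult.commute)

lemma cg_mult: "cg m f g \<Longrightarrow> cg m f' g' \<Longrightarrow> cg m (f * f') (g * g')"
  by (meson cg_mult_left cg_mult_right cg_trans)

lemma cg_add: "cg m f g \<Longrightarrow> cg m f' g' \<Longrightarrow> cg m (f + f') (g + g')"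
  by (simp add: cg_def)

lemma cg_uminus: "cg m f g \<Longrightarrow> cg m (- f) (- g)"
  by (simp add: cg_def)

lemma cg_sum: "(\<And>i. i \<in> A \<Longrightarrow> cg m (f i) (g i)) \<Longrightarrow> cg m (sum f A) (sum g A)"
  by (induction A rule: infinite_finite_induct) (auto intro: cg_add)

lemma cg_Xpow: "cg m f g \<Longrightarrow> k' \<le> m + k \<Longrightarrow> cg k' (q ^ k * f) (q ^ k * g)"
  unfolding cg_def by (auto simp: fps_X_power_mult_nth)

lemma cg_factor: "m \<le> k \<Longrightarrow> cg m (f * (1 - q ^ k)) f"
  unfolding cg_def by (auto simp: algebra_simps fps_X_power_mult_right_nth)

lemma cg_qp: "a \<le> b \<Longrightarrow> cg (Suc a) (qp b) (qp a)"
proof (induction b)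
  case 0 then show ?case by simp
next
  case (Suc b)
  show ?case
  proof (cases "a = Suc b")
    case True then show ?thesis by simp
  next
    case False
    then have "cg (Suc a) (qp b) (qp a)" using Suc by simp
    moreover have "cg (Suc a) (qp (Suc b)) (qp b)"
      unfolding qp_Suc using False Suc.prems by (intro cg_factor) simp
    ultimately show ?thesis by (rule cg_trans[rotated])
  qed
qed

lemma cg_cancel: "cg m (f * u) (g * u) \<Longrightarrow> u $ 0 \<noteq> 0 \<Longrightarrow> cg m f g"
proof -
  assume a: "cg m (f * u) (g * u)" and u: "u $ 0 \<noteq> 0"
  have "cg m (f * u * inverse u) (g * u * inverse u)" by (rule cg_mult_right[OF a])
  moreover have "u * inverse u = 1" using u by (simp add: inverse_mult_eq_1')
  ultimately show ?thesis by (simp add: mult.assoc)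
qed

lemma cg_inverse: "cg m f g \<Longrightarrow> f $ 0 \<noteq> 0 \<Longrightarrow> g $ 0 \<noteq> 0 \<Longrightarrow> cg m (inverse f) (inverse g)"
proof -
  assume a: "cg m f g" and f: "f $ 0 \<noteq> 0" and g: "g $ 0 \<noteq> 0"
  have "cg m (inverse f * f) (inverse f * g)" using cg_mult_left[OF a] by simp
  then have "cg m 1 (inverse f * g)" using f by (simp add: inverse_mult_eq_1)
  then have "cg m (1 * inverse g) (inverse f * g * inverse g)" by (rule cg_mult_right)
  then show ?thesis using g by (simp add: mult.assoc inverse_mult_eq_1' cg_sym)
qed

lemma qbin_cg1: "j \<le> m \<Longrightarrow> cg (Suc (m - j)) (qbin m j * qp j) 1"
proof -
  assume jm: "j \<le> m"
  have "cg (Suc (m - j)) (qbin m j * qp j * qp (m - j)) (1 * qp (m - j))"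
    using qbin_prod[OF jm] cg_qp[of "m - j" m] by simp
  then show ?thesis by (rule cg_cancel) simp
qed

lemma qbin_cg2: "j \<le> m \<Longrightarrow> cg (Suc j) (qbin m j * qp (m - j)) 1"
proof -
  assume jm: "j \<le> m"
  have "cg (Suc j) (qbin m j * qp (m - j) * qp j) (1 * qp j)"
    using qbin_prod[OF jm] cg_qp[of j m] jm by (simp add: mult.assoc mult.commute[of "qp j"])
  then show ?thesis by (rule cg_cancel) simp
qed


definition T :: "nat \<Rightarrow> nat" where "T x = x * (x + 1) div 2"

lemma T2: "2 * int (T x) = int x * (int x + 1)"
proof -
  have "even (x * (x + 1))" by simp
  then have "2 * (x * (x + 1) div 2) = x * (x + 1)" by simp
  then show ?thesis unfolding T_def by (metis of_nat_1 of_nat_add of_nat_mult of_nat_numeral)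
qed

definition e :: "nat \<Rightarrow> nat \<Rightarrow> nat" where
  "e n i = T (if n < i then i - n - 1 else n - i)"

lemma e2: "2 * int (e n i) = (int i - int n) * (int i - int n - 1)"
proof (cases "n < i")
  case True
  then have h: "int (i - n - 1) = int i - int n - 1" by simp
  show ?thesis using True T2[of "i - n - 1"] unfolding e_def h by (simp add: algebra_simps)
next
  case False
  then have h: "int (n - i) = int n - int i" by simp
  show ?thesis using False T2[of "n - i"] unfolding e_def h by (simp add: algebra_simps)
qed

definition cpoly :: "nat \<Rightarrow> rat fps poly" where
  "cpoly n = (\<Prod>j\<in>{1..n}. [:1, -(q ^ (j - 1)):] * [:-(q ^ j), 1:])"

lemma cpoly_Suc: "cpoly (Suc n) = cpoly n * [:-(q ^ Suc n), 1 + q ^ (2 * n + 1), -(q ^ n):]"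
proof -
  have h1: "[:1, -(q ^ (Suc n - 1)):] * [:-(q ^ Suc n), 1:] = [:-(q ^ Suc n), 1 + q ^ (2 * n + 1), -(q ^ n):]"
    by (simp add: algebra_simps flip: power_add)
  have h2: "cpoly (Suc n) = ([:1, -(q ^ (Suc n - 1)):] * [:-(q ^ Suc n), 1:]) * cpoly n"
    unfolding cpoly_def by (rule prod.nat_ivl_Suc') simp
  show ?thesis unfolding h2 h1 by (simp add: mult.commute)
qed

lemma coeff_mult3_0: "coeff (p * [:a, b, c:]) 0 = a * coeff p 0"
  by (simp add: mult_pCons_right)
lemma coeff_mult3_1: "coeff (p * [:a, b, c:]) (Suc 0) = a * coeff p 1 + b * coeff p 0"
  by (simp add: mult_pCons_right coeff_pCons)
lemma coeff_mult3_2: "coeff (p * [:a, b, c:]) (Suc (Suc i)) = a * coeff p (i + 2) + b * coeff p (i + 1) + c * coeff p i"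
  by (simp add: mult_pCons_right coeff_pCons add.assoc)

definition cf :: "nat \<Rightarrow> nat \<Rightarrow> rat fps" where
  "cf n i = (-1) ^ (i + n) * q ^ (e n i) * qbin (2 * n) i"

lemma qbin_exp2: "qbin (Suc (Suc m)) (Suc (Suc j)) = q ^ (m - j) * qbin m j + (1 + q ^ Suc m) * qbin m (Suc j) + q ^ (j + 2) * qbin m (Suc (Suc j))"
proof -
  have a: "qbin (Suc (Suc m)) (Suc (Suc j)) = qbin (Suc m) (Suc j) + q ^ Suc (Suc j) * qbin (Suc m) (Suc (Suc j))"
    by simp
  have b: "qbin (Suc m) (Suc j) = q ^ (m - j) * qbin m j + qbin m (Suc j)" by (rule qbin_pascal2)
  have c: "qbin (Suc m) (Suc (Suc j)) = q ^ (m - Suc j) * qbin m (Suc j) + qbin m (Suc (Suc j))" by (rule qbin_pascal2)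
  have d: "q ^ Suc (Suc j) * (q ^ (m - Suc j) * qbin m (Suc j)) = q ^ Suc m * qbin m (Suc j)"
  proof (cases "Suc j \<le> m")
    case True
    then have "Suc (Suc j) + (m - Suc j) = Suc m" by simp
    then show ?thesis by (metis mult.assoc power_add)
  next
    case False then show ?thesis by (simp add: qbin_gt)
  qed
  show ?thesis unfolding a b c using d by (simp add: algebra_simps)
qed

lemma qbin_exp1: "qbin (Suc (Suc m)) 1 = (1 + q ^ Suc m) + q * qbin m (Suc 0)"
proof -
  have a: "qbin (Suc (Suc m)) 1 = 1 + q * qbin (Suc m) (Suc 0)" by simp
  have b: "qbin (Suc m) (Suc 0) = q ^ m + qbin m (Suc 0)" using qbin_pascal2[of m 0] by simp
  show ?thesis unfolding a b by (simp add: algebra_simps)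
qed

lemma coeff_cpoly: "coeff (cpoly n) i = cf n i"
proof (induction n arbitrary: i)
  case 0
  then show ?case by (cases i) (simp_all add: cpoly_def cf_def e_def T_def)
next
  case (Suc n)
  show ?case
  proof (cases i)
    case 0
    have ee: "e (Suc n) 0 = n + 1 + e n 0"
      using e2[of "Suc n" 0] e2[of n 0] by (simp add: algebra_simps)
    show ?thesis using 0 by (simp add: cpoly_Suc coeff_mult3_0 Suc.IH cf_def ee power_add)
  next
    case (Suc i')
    show ?thesis
    proof (cases i')
      case 0
      have ee1: "e (Suc n) 1 + 1 = Suc n + e n 1"
        using e2[of "Suc n" 1] e2[of n 1] by (simp add: algebra_simps)
      have ee0: "e (Suc n) 1 = e n 0"
        using e2[of "Suc n" 1] e2[of n 0] by (simp add: algebra_simps)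
      have "coeff (cpoly (Suc n)) 1 = -(q ^ Suc n) * cf n 1 + (1 + q ^ (2 * n + 1)) * cf n 0"
        by (simp add: cpoly_Suc coeff_mult3_1 Suc.IH)
      also have "\<dots> = cf (Suc n) 1"
      proof -
        have q1: "q ^ (e (Suc n) 1) * q = q ^ (Suc n) * q ^ (e n 1)"
          by (metis ee1 power_add power_one_right)
        have m2: "2 * Suc n = Suc (Suc (2 * n))" by simp
        have "cf (Suc n) 1 = (-1) ^ n * (q ^ (e n 0) * (1 + q ^ Suc (2 * n)) + (q ^ (e (Suc n) 1) * q) * qbin (2 * n) 1)"
          unfolding cf_def m2 qbin_exp1 ee0 by (simp add: algebra_simps)
        then show ?thesis unfolding q1 by (simp add: cf_def algebra_simps)
      qed
      finally show ?thesis using Suc 0 by simp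
    next
      case (Suc j)
      have i: "i = Suc (Suc j)" using Suc \<open>i = Suc i'\<close> by simp
      define E where "E = e (Suc n) (Suc (Suc j))"
      have eb: "E = e n (Suc j)"
        using e2[of "Suc n" "Suc (Suc j)"] e2[of n "Suc j"] unfolding E_def by (simp add: algebra_simps)
      have ec: "E + (j + 2) = Suc n + e n (Suc (Suc j))"
        using e2[of "Suc n" "Suc (Suc j)"] e2[of n "Suc (Suc j)"] unfolding E_def by (simp add: algebra_simps)
      have fa: "q ^ E * q ^ (2 * n - j) * qbin (2 * n) j = q ^ n * q ^ (e n j) * qbin (2 * n) j"
      proof (cases "j \<le> 2 * n")
        case True
        then have "E + (2 * n - j) = n + e n j"
          using e2[of "Suc n" "Suc (Suc j)"] e2[of n j] unfolding E_def by (simp add: algebra_simps of_nat_diff)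
        then show ?thesis by (metis power_add)
      next
        case False then show ?thesis by (simp add: qbin_gt)
      qed
      have fc: "q ^ E * q ^ (j + 2) = q ^ Suc n * q ^ e n (Suc (Suc j))"
        by (metis ec power_add)
      have m2: "2 * Suc n = Suc (Suc (2 * n))" by simp
      have "cf (Suc n) (Suc (Suc j)) = - ((-1) ^ (j + n)) * ((q ^ E * q ^ (2 * n - j) * qbin (2 * n) j)
           + (1 + q ^ Suc (2 * n)) * (q ^ E * qbin (2 * n) (Suc j)) + (q ^ E * q ^ (j + 2)) * qbin (2 * n) (Suc (Suc j)))"
        unfolding cf_def m2 qbin_exp2 E_def[symmetric] by (simp add: algebra_simps)
      also have "\<dots> = -(q ^ Suc n) * cf n (Suc (Suc j)) + (1 + q ^ (2 * n + 1)) * cf n (Suc j) + -(q ^ n) * cf n j"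
        unfolding fa fc unfolding eb by (simp add: cf_def algebra_simps)
      also have "\<dots> = coeff (cpoly (Suc n)) (Suc (Suc j))"
        by (simp add: cpoly_Suc coeff_mult3_2 Suc.IH)
      finally show ?thesis using i by simp
    qed
  qed
qed


lemma degree_cpoly: "degree (cpoly n) \<le> 2 * n"
  by (rule degree_le) (simp add: coeff_cpoly cf_def qbin_gt)

lemma poly_sum_ext: "degree p < M \<Longrightarrow> poly p (x :: rat fps) = (\<Sum>i<M. coeff p i * x ^ i)"
proof -
  assume d: "degree p < M"
  have "poly p x = (\<Sum>i\<le>degree p. coeff p i * x ^ i)" by (rule poly_altdef)
  also have "\<dots> = (\<Sum>i<M. coeff p i * x ^ i)"
    by (rule sum.mono_neutral_left) (use d in \<open>auto simp: coeff_eq_0\<close>)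
  finally show ?thesis .
qed

lemma poly_pderiv_1: "degree p \<le> M \<Longrightarrow> 0 < M \<Longrightarrow> poly (pderiv (p :: rat fps poly)) 1 = (\<Sum>i<Suc M. of_nat i * coeff p i)"
proof -
  assume d: "degree p \<le> M" and M: "0 < M"
  have "degree (pderiv p) < M" using d M by (simp add: degree_pderiv)
  then have "poly (pderiv p) 1 = (\<Sum>i<M. coeff (pderiv p) i)" by (simp add: poly_sum_ext)
  also have "\<dots> = (\<Sum>i<M. of_nat (Suc i) * coeff p (Suc i))" by (simp add: coeff_pderiv)
  also have "\<dots> = (\<Sum>i<Suc M. of_nat i * coeff p i)" by (subst sum.lessThan_Suc_shift) simp
  finally show ?thesis .
qed

lemma cpoly_at1: "poly (cpoly (Suc n)) 1 = 0 \<and> poly (pderiv (cpoly (Suc n))) 1 = -(qp n * qp (Suc n))"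
proof (induction n)
  case 0
  have "cpoly 1 = [:-q, 1 + q, -1:]" using cpoly_Suc[of 0] by (simp add: cpoly_def)
  then show ?case by (simp add: qp_Suc pderiv_pCons)
next
  case (Suc n)
  have p1: "poly [:-(q ^ Suc (Suc n)), 1 + q ^ (2 * Suc n + 1), -(q ^ Suc n):] 1 = (1 - q ^ Suc n) * (1 - q ^ Suc (Suc n))"
    by (simp add: algebra_simps flip: power_add)
  have E: "poly (cpoly (Suc n)) 1 = 0" and D: "poly (pderiv (cpoly (Suc n))) 1 = -(qp n * qp (Suc n))"
    using Suc.IH by auto
  have "poly (pderiv (cpoly (Suc (Suc n)))) 1 = -(qp n * qp (Suc n)) * ((1 - q ^ Suc n) * (1 - q ^ Suc (Suc n)))"
    unfolding cpoly_Suc[of "Suc n"] pderiv_mult poly_mult poly_add p1 E D by simp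
  also have "\<dots> = -(qp (Suc n) * qp (Suc (Suc n)))" by (simp add: qp_Suc algebra_simps)
  finally show ?case
    unfolding cpoly_Suc[of "Suc n"] poly_mult E by simp
qed

lemma T_ge: "x \<le> T x"
  using T2[of x] by (simp add: algebra_simps) (smt (verit) mult_le_cancel_left1 of_nat_0_le_iff of_nat_le_iff)

lemma termcg: "i \<le> 2 * Suc N \<Longrightarrow> cg (Suc N) (q ^ e (Suc N) i * (qbin (2 * Suc N) i * qp N)) (q ^ e (Suc N) i)"
proof -
  assume i: "i \<le> 2 * Suc N"
  define n where "n = Suc N"
  define B where "B = qbin (2 * n) i"
  have fin: "cg a (B * qp N) 1 \<Longrightarrow> n \<le> a + e n i \<Longrightarrow> cg n (q ^ e n i * (B * qp N)) (q ^ e n i)" for a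
    using cg_Xpow[of a "B * qp N" 1 n "e n i"] by simp
  consider "i \<le> N" | "i = n" | "n < i" unfolding n_def by linarith
  then have "cg n (q ^ e n i * (B * qp N)) (q ^ e n i)"
  proof cases
    case 1
    have h1: "cg (Suc (2 * n - i)) (B * qp i) 1" unfolding B_def using i 1 qbin_cg1[of i "2 * n"] n_def by simp
    have h2: "cg (Suc i) (B * qp N) (B * qp i)" using cg_qp[OF 1] by (rule cg_mult_left)
    have "cg (Suc i) (B * qp N) 1" using h2 cg_mono[OF h1, of "Suc i"] 1 n_def by (auto intro: cg_trans)
    moreover have "n \<le> Suc i + e n i" using T_ge[of "n - i"] 1 n_def by (simp add: e_def)
    ultimately show ?thesis by (rule fin)
  next
    case 2
    have h1: "cg (Suc n) (B * qp n) 1" unfolding B_def using qbin_cg1[of n "2 * n"] 2 by simp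
    have h2: "cg n (B * qp N) (B * qp n)" using cg_sym[OF cg_qp[of N n]] n_def by (simp add: cg_mult_left)
    have "cg n (B * qp N) 1" using h2 cg_mono[OF h1, of n] by (auto intro: cg_trans)
    moreover have "n \<le> n + e n i" by simp
    ultimately show ?thesis by (rule fin)
  next
    case 3
    have h1: "cg (Suc i) (B * qp (2 * n - i)) 1" unfolding B_def using qbin_cg2[of i "2 * n"] i n_def by simp
    have le: "2 * n - i \<le> N" using 3 n_def by simp
    have h2: "cg (Suc (2 * n - i)) (B * qp N) (B * qp (2 * n - i))" using cg_qp[OF le] by (rule cg_mult_left)
    have "cg (Suc (2 * n - i)) (B * qp (2 * n - i)) 1" using cg_mono[OF h1, of "Suc (2 * n - i)"] 3 by simp
    then have "cg (Suc (2 * n - i)) (B * qp N) 1" using h2 by (auto intro: cg_trans)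
    moreover have "n \<le> Suc (2 * n - i) + e n i" using T_ge[of "i - n - 1"] 3 i n_def by (simp add: e_def)
    ultimately show ?thesis by (rule fin)
  qed
  then show ?thesis unfolding n_def B_def .
qed


definition Jn :: "nat \<Rightarrow> rat fps" where
  "Jn n = (\<Sum>j<n. (-1) ^ j * of_nat (2 * j + 1) * q ^ T j)"

lemma sum_split: "(\<Sum>i<Suc (2 * n). f i) = (\<Sum>j\<le>n. f (n - j)) + (\<Sum>j<n. f (Suc n + j)) "
  for f :: "nat \<Rightarrow> 'a::comm_monoid_add"
proof -
  have u: "{..<Suc (2 * n)} = {..n} \<union> {Suc n..<Suc (2 * n)}" by auto
  have a: "(\<Sum>j\<le>n. f (n - j)) = (\<Sum>i\<le>n. f i)"
    by (rule sum.reindex_bij_witness[of _ "\<lambda>i. n - i" "\<lambda>i. n - i"]) auto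
  have b: "(\<Sum>j<n. f (Suc n + j)) = (\<Sum>i\<in>{Suc n..<Suc (2 * n)}. f i)"
    by (rule sum.reindex_bij_witness[of _ "\<lambda>i. i - Suc n" "\<lambda>j. Suc n + j"]) auto
  show ?thesis unfolding u a b by (rule sum.union_disjoint) auto
qed

lemma Ssum: "(\<Sum>i<Suc (2 * n). of_nat i * ((-1) ^ (i + n) * q ^ e n i)) = - Jn n"
proof -
  have a: "(\<Sum>j\<le>n. of_nat (n - j) * ((-1) ^ (n - j + n) * q ^ e n (n - j)))
      = (\<Sum>j<n. of_nat (n - j) * ((-1) ^ j * q ^ T j))"
  proof -
    have "(\<Sum>j\<le>n. of_nat (n - j) * ((-1) ^ (n - j + n) * q ^ e n (n - j)))
        = (\<Sum>j\<le>n. of_nat (n - j) * ((-1) ^ j * q ^ T j))"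
    proof (rule sum.cong)
      fix j assume "j \<in> {..n}"
      then have j: "j \<le> n" by simp
      have eq: "n - j + n = j + 2 * (n - j)" using j by simp
      have s: "(-1::rat fps) ^ (n - j + n) = (-1) ^ j" unfolding eq by (simp add: power_add power_mult)
      have "e n (n - j) = T j" using j by (auto simp: e_def)
      then show "of_nat (n - j) * ((-1) ^ (n - j + n) * q ^ e n (n - j)) = of_nat (n - j) * ((-1) ^ j * q ^ T j)"
        using s by simp
    qed simp
    also have "\<dots> = (\<Sum>j<n. of_nat (n - j) * ((-1) ^ j * q ^ T j))"
      by (simp add: lessThan_Suc_atMost[symmetric])
    finally show ?thesis .
  qed
  have b: "(\<Sum>j<n. of_nat (Suc n + j) * ((-1) ^ (Suc n + j + n) * q ^ e n (Suc n + j)))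
      = (\<Sum>j<n. - (of_nat (Suc n + j) * ((-1) ^ j * q ^ T j)))"
  proof (rule sum.cong)
    fix j assume "j \<in> {..<n}"
    have eq: "Suc n + j + n = Suc j + 2 * n" by simp
    have s: "(-1::rat fps) ^ (Suc n + j + n) = - ((-1) ^ j)" unfolding eq by (simp add: power_add power_mult)
    have "e n (Suc n + j) = T j" by (simp add: e_def)
    then show "of_nat (Suc n + j) * ((-1) ^ (Suc n + j + n) * q ^ e n (Suc n + j)) = - (of_nat (Suc n + j) * ((-1) ^ j * q ^ T j))"
      using s by simp
  qed simp
  have c: "(\<Sum>j<n. of_nat (n - j) * ((-1) ^ j * q ^ T j)) + (\<Sum>j<n. - (of_nat (Suc n + j) * ((-1) ^ j * q ^ T j)))
      = (\<Sum>j<n. - ((-1) ^ j * of_nat (2 * j + 1) * q ^ T j))"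
    unfolding sum.distrib[symmetric]
  proof (rule sum.cong)
    fix j assume "j \<in> {..<n}"
    then have h: "(of_nat (n - j) :: rat fps) = of_nat n - of_nat j" by (simp add: of_nat_diff)
    show "of_nat (n - j) * ((-1) ^ j * q ^ T j) + - (of_nat (Suc n + j) * ((-1) ^ j * q ^ T j)) =
         - ((-1) ^ j * of_nat (2 * j + 1) * q ^ T j)" unfolding h by (simp add: algebra_simps)
  qed simp
  show ?thesis
    unfolding sum_split a b c Jn_def by (simp add: sum_negf)
qed

lemma jacobi_cg: "cg (Suc N) (qp N ^ 3) (Jn (Suc N))"
proof -
  define n where "n = Suc N"
  have "- (qp N * qp n) = poly (pderiv (cpoly n)) 1" using cpoly_at1[of N] n_def by simp
  also have "\<dots> = (\<Sum>i<Suc (2 * n). of_nat i * cf n i)"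
    using degree_cpoly[of n] n_def by (simp add: poly_pderiv_1 coeff_cpoly)
  finally have d: "- (qp N * qp n) = (\<Sum>i<Suc (2 * n). of_nat i * cf n i)" .
  have "- (qp N * qp n) * qp N = (\<Sum>i<Suc (2 * n). of_nat i * ((-1) ^ (i + n) * (q ^ e n i * (qbin (2 * n) i * qp N))))"
    unfolding d sum_distrib_right by (simp add: cf_def algebra_simps)
  moreover have "cg n (\<Sum>i<Suc (2 * n). of_nat i * ((-1) ^ (i + n) * (q ^ e n i * (qbin (2 * n) i * qp N))))
                      (\<Sum>i<Suc (2 * n). of_nat i * ((-1) ^ (i + n) * q ^ e n i))"
    by (intro cg_sum cg_mult_left) (use termcg n_def in auto)
  ultimately have "cg n (- (qp N * qp n) * qp N) (- Jn n)" using Ssum[of n] by simp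
  then have "cg n (qp N * qp n * qp N) (Jn n)" using cg_uminus by fastforce
  moreover have "cg n (qp N ^ 3) (qp N * qp n * qp N)"
    unfolding n_def qp_Suc using cg_factor[of "Suc N" "Suc N" "qp N * qp N * qp N"]
    by (simp add: power3_eq_cube algebra_simps cg_sym)
  ultimately show ?thesis unfolding n_def by (meson cg_trans)
qed


lemma term_nth: "((-1) ^ j * of_nat m * q ^ k :: rat fps) $ t = (if t = k then (-1) ^ j * of_nat m else 0)"
proof -
  have m1: "(-1::rat fps) ^ j = fps_const ((-1) ^ j)" by (induction j) simp_all
  have "((-1) ^ j * of_nat m :: rat fps) = fps_const ((-1) ^ j * of_nat m)"
    unfolding m1 by (simp add: fps_const_power fps_of_nat fps_const_mult[symmetric] fps_const_neg[symmetric])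
  then show ?thesis by (simp add: fps_mult_left_const_nth)
qed

lemma Jn_nth: "Jn n $ t = (\<Sum>j<n. if t = T j then (-1) ^ j * of_nat (2 * j + 1) else 0)"
  unfolding Jn_def fps_sum_nth term_nth by simp

lemma T_Suc: "T (Suc a) = T a + Suc a"
  using T2[of a] T2[of "Suc a"] by (simp add: algebra_simps)

lemma T_0[simp]: "T 0 = 0" by (simp add: T_def)

lemma T_strict: "a < b \<Longrightarrow> T a < T b"
proof (induction b)
  case 0 then show ?case by simp
next
  case (Suc b) then show ?case by (cases "a = b") (auto simp: T_Suc)
qed

lemma T_inj: "T a = T b \<longleftrightarrow> a = b"
  by (metis T_strict less_irrefl nat_neq_iff)


definition w :: "nat \<Rightarrow> int" where "w j = (-1) ^ (j + 1) * (2 * int j + 1)"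
definition wt :: "nat \<Rightarrow> int" where "wt x = (\<Sum>j\<in>{1..x}. if x = T j then w j else 0)"

lemma wt_T: "1 \<le> j \<Longrightarrow> wt (T j) = w j"
proof -
  assume j: "1 \<le> j"
  have "wt (T j) = (\<Sum>i\<in>{1..T j}. if i = j then w i else 0)"
    unfolding wt_def by (rule sum.cong) (auto simp: T_inj)
  also have "\<dots> = w j" using j T_ge[of j] by (simp add: sum.delta)
  finally show ?thesis .
qed

lemma wt_nz: "wt x \<noteq> 0 \<Longrightarrow> \<exists>j\<ge>1. x = T j"
proof (rule ccontr)
  assume a: "wt x \<noteq> 0" and b: "\<not> (\<exists>j\<ge>1. x = T j)"
  have "wt x = 0" unfolding wt_def by (rule sum.neutral) (use b in auto)
  with a show False by simp
qed

lemma Jn_nth_wt: "1 \<le> t \<Longrightarrow> t \<le> N \<Longrightarrow> Jn (Suc N) $ t = - of_int (wt t)"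
proof -
  assume t1: "1 \<le> t" and tN: "t \<le> N"
  show ?thesis
  proof (cases "\<exists>j. t = T j")
    case True
    then obtain j where tj: "t = T j" by blast
    have j1: "1 \<le> j" using t1 tj by (cases j) auto
    have jN: "j < Suc N" using T_ge[of j] tj tN by simp
    have "Jn (Suc N) $ t = (\<Sum>i<Suc N. if i = j then (-1) ^ i * of_nat (2 * i + 1) else 0)"
      unfolding Jn_nth tj by (rule sum.cong) (auto simp: T_inj)
    also have "\<dots> = (-1) ^ j * of_nat (2 * j + 1)" using jN by (simp add: sum.delta)
    also have "\<dots> = - of_int (wt t)" unfolding tj wt_T[OF j1] w_def by simp
    finally show ?thesis .
  next
    case False
    have "Jn (Suc N) $ t = 0" unfolding Jn_nth by (rule sum.neutral) (use False in auto)
    moreover have "wt t = 0" using wt_nz False by blast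
    ultimately show ?thesis by simp
  qed
qed

lemma Jn_nth0: "Jn (Suc N) $ 0 = 1"
proof -
  have "Jn (Suc N) $ 0 = (\<Sum>i<Suc N. if i = 0 then (-1) ^ i * of_nat (2 * i + 1) else 0)"
    unfolding Jn_nth by (rule sum.cong) (auto simp: T_inj[of 0, simplified])
  also have "\<dots> = 1" by (simp add: sum.delta)
  finally show ?thesis .
qed

lemma inv_rec:
  assumes m1: "1 \<le> m" and mN: "m \<le> N"
  shows "inverse (Jn (Suc N)) $ m = (\<Sum>t\<in>{1..m}. of_int (wt t) * inverse (Jn (Suc N)) $ (m - t))"
proof -
  define F where "F = Jn (Suc N)"
  define a where "a = inverse F"
  have "F * a = 1" unfolding a_def F_def using Jn_nth0 by (simp add: inverse_mult_eq_1')
  then have "(F * a) $ m = 0" using m1 by simp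
  then have "(\<Sum>i=0..m. F $ i * a $ (m - i)) = 0" by (simp add: fps_mult_nth)
  then have "F $ 0 * a $ (m - 0) + (\<Sum>i=Suc 0..m. F $ i * a $ (m - i)) = 0"
    by (simp add: sum.atLeast_Suc_atMost)
  then have "a $ m = - (\<Sum>i=1..m. F $ i * a $ (m - i))" unfolding F_def Jn_nth0 by (simp add: eq_neg_iff_add_eq_0)
  also have "\<dots> = (\<Sum>t\<in>{1..m}. of_int (wt t) * a $ (m - t))"
    unfolding sum_negf[symmetric] F_def by (rule sum.cong) (use mN in \<open>auto simp: Jn_nth_wt\<close>)
  finally show ?thesis unfolding a_def F_def .
qed


lemma P3_iff: "x \<in> P3 \<longleftrightarrow> (\<exists>j. x = T j)"
  unfolding P3_def T_def by auto

lemma length_le_sum: "\<forall>x\<in>set c. 0 < (x::nat) \<Longrightarrow> length c \<le> sum_list c"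
  by (induction c) auto

lemma comp_fin: "finite (compositions A m)"
proof (rule finite_subset)
  show "compositions A m \<subseteq> {xs. set xs \<subseteq> {..m} \<and> length xs \<le> m}"
    unfolding compositions_def using length_le_sum member_le_sum_list by fastforce
  show "finite {xs. set xs \<subseteq> {..m} \<and> length xs \<le> m}" by (rule finite_lists_length_le) simp
qed

lemma comp0: "compositions A 0 = {[]}"
  unfolding compositions_def by (auto simp: sum_list_eq_0_iff) (metis list.set_intros(1) neq_Nil_conv less_irrefl)

lemma comp_pos: "0 < m \<Longrightarrow> compositions P3 m = (\<lambda>(t, c). t # c) ` (SIGMA t:{t\<in>{1..m}. t \<in> P3}. compositions P3 (m - t))"
proof (intro equalityI subsetI)
  fix c assume m: "0 < m" and c: "c \<in> compositions P3 m"
  then obtain t c' where tc: "c = t # c'" unfolding compositions_def by (cases c) auto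
  then show "c \<in> (\<lambda>(t, c). t # c) ` (SIGMA t:{t\<in>{1..m}. t \<in> P3}. compositions P3 (m - t))"
    using c unfolding compositions_def by (auto intro!: image_eqI[of _ _ "(t, c')"])
next
  fix c assume "c \<in> (\<lambda>(t, c). t # c) ` (SIGMA t:{t\<in>{1..m}. t \<in> P3}. compositions P3 (m - t))"
  then show "c \<in> compositions P3 m" unfolding compositions_def by auto
qed

definition C :: "nat \<Rightarrow> int" where
  "C m = (\<Sum>c\<in>compositions P3 m. prod_list (map wt c))"

lemma C0: "C 0 = 1" by (simp add: C_def comp0)

lemma C_rec: "0 < m \<Longrightarrow> C m = (\<Sum>t\<in>{1..m}. wt t * C (m - t))"
proof -
  assume m: "0 < m"
  define A where "A = {t\<in>{1..m}. t \<in> P3}"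
  have inj: "inj_on (\<lambda>(t, c). t # c) (SIGMA t:A. compositions P3 (m - t))"
    by (rule inj_onI) auto
  have "C m = (\<Sum>p\<in>(SIGMA t:A. compositions P3 (m - t)). prod_list (map wt ((\<lambda>(t, c). t # c) p)))"
    unfolding C_def comp_pos[OF m] A_def[symmetric] by (rule sum.reindex[OF inj, unfolded comp_def])
  also have "\<dots> = (\<Sum>t\<in>A. \<Sum>c\<in>compositions P3 (m - t). wt t * prod_list (map wt c))"
    by (subst sum.Sigma) (auto simp: A_def comp_fin intro!: sum.cong)
  also have "\<dots> = (\<Sum>t\<in>A. wt t * C (m - t))" by (simp add: C_def sum_distrib_left)
  also have "\<dots> = (\<Sum>t\<in>{1..m}. wt t * C (m - t))"
  proof (rule sum.mono_neutral_left)
    show "\<forall>t\<in>{1..m} - A. wt t * C (m - t) = 0"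
      using wt_nz unfolding A_def P3_iff by fastforce
  qed (auto simp: A_def)
  finally show ?thesis .
qed

lemma inv_C: "m \<le> N \<Longrightarrow> inverse (Jn (Suc N)) $ m = of_int (C m)"
proof (induction m rule: less_induct)
  case (less m)
  show ?case
  proof (cases "m = 0")
    case True then show ?thesis by (simp add: Jn_nth0 C0)
  next
    case False
    then have "inverse (Jn (Suc N)) $ m = (\<Sum>t\<in>{1..m}. of_int (wt t) * of_int (C (m - t)))"
      using inv_rec[of m N] less by (auto intro!: sum.cong)
    also have "\<dots> = of_int (C m)" using C_rec[of m] False by simp
    finally show ?thesis .
  qed
qed


lemma p3_C: "p3 N = of_int (C N)"
proof -
  have "p3 N = inverse (qp N ^ 3) $ N"
    unfolding p3_def qp_def by (simp add: fps_inverse_power)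
  also have "\<dots> = inverse (Jn (Suc N)) $ N"
    using cg_inverse[OF jacobi_cg[of N]] Jn_nth0[of N] unfolding cg_def by (simp add: fps_nth_power_0)
  also have "\<dots> = of_int (C N)" by (simp add: inv_C)
  finally show ?thesis .
qed

definition tinv :: "nat \<Rightarrow> nat" where "tinv x = (THE j. x = T j)"

lemma tinv_T[simp]: "tinv (T j) = j"
  unfolding tinv_def by (rule the_equality) (auto simp: T_inj)

lemma prod_count:
  "\<forall>x\<in>set c. \<exists>j\<in>{1..n}. x = T j \<Longrightarrow>
   (\<Prod>j\<in>{1..n}. (f j :: int) ^ count_list c (T j)) = prod_list (map (\<lambda>x. f (tinv x)) c)"
proof (induction c)
  case Nil then show ?case by simp
next
  case (Cons x c)
  then obtain j0 where j0: "j0 \<in> {1..n}" "x = T j0" by auto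
  have "(\<Prod>j\<in>{1..n}. f j ^ count_list (x # c) (T j))
      = (\<Prod>j\<in>{1..n}. (if j = j0 then f j else 1) * f j ^ count_list c (T j))"
    by (rule prod.cong) (auto simp: j0 T_inj)
  also have "\<dots> = f j0 * (\<Prod>j\<in>{1..n}. f j ^ count_list c (T j))"
    using j0 by (simp add: prod.distrib prod.delta)
  finally show ?case using Cons j0 by simp
qed

lemma S_iff: "T j \<in> {m * (2 * m + 1) | m. True} \<longleftrightarrow> even j"
proof -
  have Tm: "T (2 * m) = m * (2 * m + 1)" for m
    unfolding T_def by (simp add: algebra_simps)
  have "T j \<in> {m * (2 * m + 1) | m. True} \<longleftrightarrow> (\<exists>m. T j = T (2 * m))" unfolding Tm by auto
  also have "\<dots> \<longleftrightarrow> even j" by (auto simp: T_inj)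
  finally show ?thesis .
qed

lemma sign_count:
  "\<forall>x\<in>set c. \<exists>j\<in>{1..n}. x = T j \<Longrightarrow>
   (-1::int) ^ ellplus c = prod_list (map (\<lambda>x. (-1) ^ (tinv x + 1)) c)"
proof (induction c)
  case Nil then show ?case by (simp add: ellplus_def)
next
  case (Cons x c)
  then obtain j0 where j0: "x = T j0" by auto
  have "ellplus (x # c) = (if even j0 then 1 else 0) + ellplus c"
    unfolding ellplus_def using S_iff[of j0] j0 by simp
  then show ?case using Cons j0 by (simp add: power_add)
qed

lemma comp_T: "c \<in> compositions P3 n \<Longrightarrow> \<forall>x\<in>set c. \<exists>j\<in>{1..n}. x = T j"
proof
  fix x assume c: "c \<in> compositions P3 n" and x: "x \<in> set c"
  then have "x \<in> P3" "0 < x" "x \<le> n" unfolding compositions_def using member_le_sum_list by auto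
  then obtain j where "x = T j" "0 < x" "x \<le> n" by (auto simp: P3_iff)
  moreover have "j \<noteq> 0" using calculation by (cases j) auto
  moreover have "j \<le> n" using T_ge[of j] calculation by simp
  ultimately show "\<exists>j\<in>{1..n}. x = T j" by auto
qed

lemma wt_tinv: "\<forall>x\<in>set c. \<exists>j\<in>{1..n}. x = T j \<Longrightarrow> map (\<lambda>x. w (tinv x)) c = map wt c"
  by (auto simp: wt_T)

lemma tt: "j * (j + 1) div 2 = T j" by (simp add: T_def)

theorem mainTheorem13:
  fixes n :: nat
  shows "p3 n = of_int (\<Sum>c\<in>compositions P3 n.
            \<Prod>j\<in>{1..n}. ((-1) ^ (j + 1) * (2 * int j + 1)) ^ mult (j * (j + 1) div 2) c)
       \<and> (\<Sum>c\<in>compositions P3 n.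
            \<Prod>j\<in>{1..n}. ((-1) ^ (j + 1) * (2 * int j + 1)) ^ mult (j * (j + 1) div 2) c)
         = (\<Sum>c\<in>compositions P3 n.
            (-1) ^ ellplus c * (\<Prod>j\<in>{1..n}. (2 * int j + 1) ^ mult (j * (j + 1) div 2) c))"
proof
  have "(\<Sum>c\<in>compositions P3 n.
            \<Prod>j\<in>{1..n}. ((-1) ^ (j + 1) * (2 * int j + 1)) ^ mult (j * (j + 1) div 2) c) = C n"
    unfolding C_def
  proof (rule sum.cong)
    fix c assume c: "c \<in> compositions P3 n"
    show "(\<Prod>j\<in>{1..n}. ((-1) ^ (j + 1) * (2 * int j + 1)) ^ mult (j * (j + 1) div 2) c) = prod_list (map wt c)"
    proof -
      have "(\<Prod>j\<in>{1..n}. w j ^ count_list c (T j)) = prod_list (map wt c)"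
        using prod_count[OF comp_T[OF c], of w] wt_tinv[OF comp_T[OF c]] by simp
      then show ?thesis unfolding mult_def tt w_def .
    qed
  qed simp
  then show "p3 n = of_int (\<Sum>c\<in>compositions P3 n.
            \<Prod>j\<in>{1..n}. ((-1) ^ (j + 1) * (2 * int j + 1)) ^ mult (j * (j + 1) div 2) c)"
    using p3_C by simp
next
  show "(\<Sum>c\<in>compositions P3 n.
            \<Prod>j\<in>{1..n}. ((-1) ^ (j + 1) * (2 * int j + 1)) ^ mult (j * (j + 1) div 2) c)
         = (\<Sum>c\<in>compositions P3 n.
            (-1) ^ ellplus c * (\<Prod>j\<in>{1..n}. (2 * int j + 1) ^ mult (j * (j + 1) div 2) c))"
  proof (rule sum.cong)
    fix c assume c: "c \<in> compositions P3 n"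
    have "(\<Prod>j\<in>{1..n}. ((-1) ^ (j + 1) * (2 * int j + 1)) ^ mult (j * (j + 1) div 2) c)
        = (\<Prod>j\<in>{1..n}. ((-1) ^ (j + 1)) ^ mult (j * (j + 1) div 2) c) * (\<Prod>j\<in>{1..n}. (2 * int j + 1) ^ mult (j * (j + 1) div 2) c)"
      by (simp only: power_mult_distrib prod.distrib)
    also have "(\<Prod>j\<in>{1..n}. ((-1::int) ^ (j + 1)) ^ mult (j * (j + 1) div 2) c) = (-1) ^ ellplus c"
      using prod_count[OF comp_T[OF c], of "\<lambda>j. (-1) ^ (j + 1)"] sign_count[OF comp_T[OF c]]
      unfolding mult_def tt by simp
    finally show "(\<Prod>j\<in>{1..n}. ((-1) ^ (j + 1) * (2 * int j + 1)) ^ mult (j * (j + 1) div 2) c)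
        = (-1) ^ ellplus c * (\<Prod>j\<in>{1..n}. (2 * int j + 1) ^ mult (j * (j + 1) div 2) c)" .
  qed simp
qed

end
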